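(* Let $n$ be a positive integer and $N$ an even non-negative integer. Then $N$ has a potentially connected graphical partition with exactly $n$ parts if and only if $N$ has a forcibly connected graphical partition with exactly $n$ parts.
   Context: A partition of an integer $N$ is a non-increasing sequence of positive integers summing to $N$; its terms are its parts. A partition is graphical if it is the vertex degree sequence of some simple graph (finite, undirected, no loops or multiple edges); such a graph is a realization. A graphical partition is potentially connected if at least one of its realizations is connected, and forcibly connected if all of its realizations are connected. *)

theory Defs
  imports Main
begin

definition simple_graph :: "nat \<Rightarrow> (nat \<Rightarrow> nat \<Rightarrow> bool) \<Rightarrow> bool" where
  "simple_graph n E \<longleftrightarrow> (\<forall>i j. E i j \<longrightarrow> i < n \<and> j < n \<and> i \<noteq> j \<and> E j i)"

definition degree :: "nat \<Rightarrow> (nat \<Rightarrow> nat \<Rightarrow> bool) \<Rightarrow> nat \<Rightarrow> nat" where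
  "degree n E i = card {j. j < n \<and> E i j}"

definition connected_graph :: "nat \<Rightarrow> (nat \<Rightarrow> nat \<Rightarrow> bool) \<Rightarrow> bool" where
  "connected_graph n E \<longleftrightarrow> (\<forall>i<n. \<forall>j<n. E\<^sup>*\<^sup>* i j)"

definition is_partition :: "nat \<Rightarrow> nat \<Rightarrow> nat list \<Rightarrow> bool" where
  "is_partition N n d \<longleftrightarrow> length d = n \<and> sorted_wrt (\<ge>) d \<and> (\<forall>x\<in>set d. 0 < x) \<and> sum_list d = N"

definition realization :: "nat list \<Rightarrow> (nat \<Rightarrow> nat \<Rightarrow> bool) \<Rightarrow> bool" where
  "realization d E \<longleftrightarrow> simple_graph (length d) E \<and> (\<forall>i<length d. degree (length d) E i = d ! i)"

definition graphical :: "nat list \<Rightarrow> bool" where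
  "graphical d \<longleftrightarrow> (\<exists>E. realization d E)"

definition potentially_connected :: "nat list \<Rightarrow> bool" where
  "potentially_connected d \<longleftrightarrow> graphical d \<and> (\<exists>E. realization d E \<and> connected_graph (length d) E)"

definition forcibly_connected :: "nat list \<Rightarrow> bool" where
  "forcibly_connected d \<longleftrightarrow> graphical d \<and> (\<forall>E. realization d E \<longrightarrow> connected_graph (length d) E)"

end

theory Submission
  imports Defs
begin

lemma deg_le:
  assumes "simple_graph n E" "i < n"
  shows "degree n E i \<le> n - 1"
proof -
  have "{j. j < n \<and> E i j} \<subseteq> {..<n} - {i}"
    using assms unfolding simple_graph_def by auto
  then have "card {j. j < n \<and> E i j} \<le> card ({..<n} - {i})"
    by (intro card_mono) auto
  then show ?thesis using assms(2) unfolding degree_def by simp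
qed

lemma sum_deg:
  assumes "realization d E"
  shows "sum_list d = card {(i,j). i < length d \<and> j < length d \<and> E i j}"
proof -
  let ?n = "length d"
  have "sum_list d = (\<Sum>i<?n. d ! i)"
    by (simp add: sum_list_sum_nth atLeast0LessThan)
  also have "\<dots> = (\<Sum>i<?n. card {j. j < ?n \<and> E i j})"
    using assms unfolding realization_def degree_def by simp
  also have "\<dots> = card (SIGMA i:{..<?n}. {j. j < ?n \<and> E i j})"
    by (rule card_SigmaI[symmetric]) auto
  also have "(SIGMA i:{..<?n}. {j. j < ?n \<and> E i j}) = {(i,j). i < ?n \<and> j < ?n \<and> E i j}"
    by auto
  finally show ?thesis .
qed

lemma lower:
  assumes sg: "simple_graph n E" and cg: "connected_graph n E" and n: "0 < n"
  shows "2 * (n - 1) \<le> card {(i,j). i < n \<and> j < n \<and> E i j}"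
proof -
  define dist where "dist v = (LEAST k. (E ^^ k) 0 v)" for v
  have ex: "\<exists>u. u < n \<and> E v u \<and> dist u < dist v" if v: "v \<in> {1..<n}" for v
  proof -
    have "E\<^sup>*\<^sup>* 0 v" using cg n v unfolding connected_graph_def by auto
    then obtain k where "(E ^^ k) 0 v" by (auto simp: rtranclp_power)
    then have dv: "(E ^^ dist v) 0 v" unfolding dist_def by (rule LeastI)
    have "dist v \<noteq> 0" proof assume "dist v = 0" with dv have "v = 0" by simp with v show False by simp qed
    then obtain m where m: "dist v = Suc m" by (cases "dist v") auto
    with dv obtain u where u1: "(E ^^ m) 0 u" and u2: "E u v" by auto
    have "dist u \<le> m" unfolding dist_def using u1 by (rule Least_le)
    moreover have "u < n" "E v u" using sg u2 unfolding simple_graph_def by auto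
    ultimately show ?thesis using m by (intro exI[of _ u]) auto
  qed
  then obtain p where p: "\<And>v. v \<in> {1..<n} \<Longrightarrow> p v < n \<and> E v (p v) \<and> dist (p v) < dist v"
    by metis
  define A where "A = {1..<n::nat}"
  define f where "f v = (v, p v)" for v
  define g where "g v = (p v, v)" for v
  have injf: "inj_on f A" unfolding f_def inj_on_def by auto
  have injg: "inj_on g A" unfolding g_def inj_on_def by auto
  have disj: "f ` A \<inter> g ` A = {}"
  proof (rule ccontr)
    assume "f ` A \<inter> g ` A \<noteq> {}"
    then obtain x where "x \<in> f ` A" "x \<in> g ` A" by blast
    then obtain v w where vw: "v \<in> A" "w \<in> A" "f v = g w" by (metis imageE)
    then have "v = p w" "w = p v" unfolding f_def g_def by auto
    moreover have "dist (p w) < dist w" "dist (p v) < dist v" using p vw(1,2) unfolding A_def by auto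
    ultimately show False by simp
  qed
  have sub: "f ` A \<union> g ` A \<subseteq> {(i,j). i < n \<and> j < n \<and> E i j}"
  proof -
    have "f ` A \<subseteq> {(i,j). i < n \<and> j < n \<and> E i j}"
      using p unfolding f_def A_def by auto
    moreover have "g ` A \<subseteq> {(i,j). i < n \<and> j < n \<and> E i j}"
    proof
      fix x assume "x \<in> g ` A"
      then obtain v where v: "v \<in> A" "x = (p v, v)" unfolding g_def by auto
      then have "E v (p v)" "p v < n" "v < n" using p unfolding A_def by auto
      then have "E (p v) v" using sg unfolding simple_graph_def by auto
      then show "x \<in> {(i,j). i < n \<and> j < n \<and> E i j}" using v \<open>p v < n\<close> \<open>v < n\<close> by auto
    qed
    ultimately show ?thesis by auto
  qed
  have fin: "finite {(i,j). i < n \<and> j < n \<and> E i j}"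
    by (rule finite_subset[of _ "{..<n} \<times> {..<n}"]) auto
  have "card (f ` A \<union> g ` A) = 2 * (n - 1)"
    using card_Un_disjoint[of "f ` A" "g ` A"] disj card_image[OF injf] card_image[OF injg]
    unfolding A_def by auto
  with card_mono[OF fin sub] show ?thesis by simp
qed


definition gr :: "nat \<Rightarrow> nat \<Rightarrow> nat \<Rightarrow> nat \<Rightarrow> nat \<Rightarrow> bool" where
  "gr a c n i j \<longleftrightarrow> i < n \<and> j < n \<and> i \<noteq> j \<and> (min i j < a \<or> (min i j = a \<and> max i j \<le> c))"

definition fv :: "nat \<Rightarrow> nat \<Rightarrow> nat \<Rightarrow> nat \<Rightarrow> nat" where
  "fv a c n v = (if v < a then n - 1 else if v = a then c else if v \<le> c then a + 1 else a)"

lemma gr_simple: "simple_graph n (gr a c n)"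
  unfolding simple_graph_def gr_def by (auto simp: min_def max_def)

lemma gr_degree:
  assumes "1 \<le> a" "a \<le> c" "c < n" "v < n"
  shows "degree n (gr a c n) v = fv a c n v"
proof -
  consider "v < a" | "v = a" | "a < v" "v \<le> c" | "c < v" by linarith
  then show ?thesis
  proof cases
    case 1
    then have "{j. j < n \<and> gr a c n v j} = {..<n} - {v}"
      using assms unfolding gr_def by (auto simp: min_def max_def)
    then show ?thesis using 1 assms unfolding degree_def fv_def by simp
  next
    case 2
    then have "{j. j < n \<and> gr a c n v j} = {..c} - {v}"
      using assms unfolding gr_def by (auto simp: min_def max_def)
    then show ?thesis using 2 assms unfolding degree_def fv_def by simp
  next
    case 3
    then have "{j. j < n \<and> gr a c n v j} = {..a}"
      using assms unfolding gr_def by (auto simp: min_def max_def)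
    then show ?thesis using 3 assms unfolding degree_def fv_def by simp
  next
    case 4
    then have "{j. j < n \<and> gr a c n v j} = {..<a}"
      using assms unfolding gr_def by (auto simp: min_def max_def)
    then show ?thesis using 4 assms unfolding degree_def fv_def by simp
  qed
qed

lemma fv_sum:
  assumes "1 \<le> a" "a \<le> c" "c < n"
  shows "sum_list (map (fv a c n) [0..<n]) = a*(n-1) + c + (c-a)*(a+1) + (n-1-c)*a"
proof -
  have "sum_list (map (fv a c n) [0..<n]) = sum (fv a c n) {0..<n}"
    by (simp add: sum_set_upt_conv_sum_list_nat[symmetric])
  also have "\<dots> = sum (fv a c n) {0..<a} + sum (fv a c n) {a..<Suc a}
      + sum (fv a c n) {Suc a..<Suc c} + sum (fv a c n) {Suc c..<n}"
  proof -
    have e1: "sum (fv a c n) {0..<a} + sum (fv a c n) {a..<Suc a} = sum (fv a c n) {0..<Suc a}"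
      by (rule sum.atLeastLessThan_concat) auto
    have e2: "sum (fv a c n) {0..<Suc a} + sum (fv a c n) {Suc a..<Suc c} = sum (fv a c n) {0..<Suc c}"
      using assms by (intro sum.atLeastLessThan_concat) auto
    have e3: "sum (fv a c n) {0..<Suc c} + sum (fv a c n) {Suc c..<n} = sum (fv a c n) {0..<n}"
      using assms by (intro sum.atLeastLessThan_concat) auto
    show ?thesis using e1 e2 e3 by simp
  qed
  also have "sum (fv a c n) {0..<a} = a * (n-1)"
    by (simp add: fv_def)
  also have "sum (fv a c n) {a..<Suc a} = c" by (simp add: fv_def)
  also have "sum (fv a c n) {Suc a..<Suc c} = sum (\<lambda>_. a+1) {Suc a..<Suc c}"
    by (rule sum.cong) (auto simp: fv_def)
  also have "\<dots> = (c-a)*(a+1)" by simp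
  also have "sum (fv a c n) {Suc c..<n} = sum (\<lambda>_. a) {Suc c..<n}"
    using assms by (intro sum.cong) (auto simp: fv_def)
  also have "\<dots> = (n-1-c)*a" by simp
  finally show ?thesis by simp
qed

lemma S_int:
  assumes "a \<le> c" "c < n"
  shows "int (a*(n-1) + c + (c-a)*(a+1) + (n-1-c)*a)
     = 2*int a*int n - 3*int a - int a * int a + 2 * int c"
proof -
  have "int (a*(n-1) + c + (c-a)*(a+1) + (n-1-c)*a)
     = int a*(int n-1) + int c + (int c- int a)*(int a+1) + (int n-1-int c)*int a"
  proof -
    have h1: "int (c-a) = int c - int a" "int (n-1-c) = int n - 1 - int c" "int (n-1) = int n - 1"
      using assms by (auto simp: of_nat_diff)
    show ?thesis by (simp only: of_nat_add of_nat_mult h1 of_nat_1)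
  qed
  then show ?thesis by (simp add: algebra_simps)
qed

lemma exists_ac:
  fixes n k :: nat
  assumes "2 \<le> n" "2*(n-1) + 2*k \<le> n*(n-1)"
  shows "\<exists>a c. 1 \<le> a \<and> a \<le> c \<and> c < n \<and>
     2*int a*int n - 3*int a - int a * int a + 2 * int c = int (2*(n-1) + 2*k)"
  using assms(2)
proof (induction k)
  case 0
  show ?case using assms(1) by (intro exI[of _ 1]) (auto simp: of_nat_diff)
next
  case (Suc k)
  then obtain a c where ac: "1 \<le> a" "a \<le> c" "c < n"
    "2*int a*int n - 3*int a - int a * int a + 2 * int c = int (2*(n-1) + 2*k)" by auto
  have bound: "int (2*(n-1) + 2*Suc k) \<le> int n * (int n - 1)"
  proof -
    have "int (2*(n-1) + 2*Suc k) \<le> int (n*(n-1))" using Suc.prems by (simp only: of_nat_le_iff)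
    also have "\<dots> = int n * (int n - 1)" using assms(1) by (simp add: of_nat_diff)
    finally show ?thesis .
  qed
  show ?case
  proof (cases "c + 1 < n")
    case True
    then show ?thesis using ac by (intro exI[of _ a] exI[of _ "c+1"]) auto
  next
    case False
    then have cn: "int c = int n - 1" using ac by linarith
    have "\<not> (a + 2 \<ge> n)"
    proof
      assume "a + 2 \<ge> n"
      then have "int n = int a + 1 \<or> int n = int a + 2" using ac by linarith
      then have "2*int a*int n - 3*int a - int a * int a + 2 * int c = int n * (int n - 1)"
      proof
        assume h: "int n = int a + 1"
        show ?thesis unfolding cn h by (simp add: algebra_simps)
      next
        assume h: "int n = int a + 2"
        show ?thesis unfolding cn h by (simp add: algebra_simps)
      qed
      then show False using ac(4) bound by simp
    qed
    then have "a + 2 < n" by simp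
    moreover have "2*int (a+1)*int n - 3*int (a+1) - int (a+1) * int (a+1) + 2 * int (a+2)
        = 2*int a*int n - 3*int a - int a * int a + 2 * int c + 2"
      using cn by (simp add: algebra_simps)
    ultimately show ?thesis using ac by (intro exI[of _ "a+1"] exI[of _ "a+2"]) auto
  qed
qed


lemma sum_upper:
  assumes "realization d E"
  shows "sum_list d \<le> length d * (length d - 1)"
proof -
  let ?n = "length d"
  have "sum_list d = (\<Sum>i<?n. d ! i)"
    by (simp add: sum_list_sum_nth atLeast0LessThan)
  also have "\<dots> \<le> (\<Sum>i<?n. ?n - 1)"
  proof (rule sum_mono)
    fix i assume "i \<in> {..<?n}"
    then show "d ! i \<le> ?n - 1" using assms deg_le[of ?n E i] unfolding realization_def by auto
  qed
  finally show ?thesis by simp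
qed

lemma construct:
  assumes "1 \<le> a" "a \<le> c" "c < n"
  shows "is_partition (a*(n-1) + c + (c-a)*(a+1) + (n-1-c)*a) n (map (fv a c n) [0..<n])
     \<and> forcibly_connected (map (fv a c n) [0..<n])"
proof -
  let ?d = "map (fv a c n) [0..<n]"
  have real: "realization ?d (gr a c n)"
    unfolding realization_def using gr_simple gr_degree[OF assms] by auto
  have mono: "fv a c n j \<le> fv a c n i" if "i < j" "j < n" for i j
    using that assms unfolding fv_def by auto
  have sorted: "sorted_wrt (\<ge>) ?d"
    unfolding sorted_wrt_iff_nth_less using mono by auto
  have pos: "\<forall>x\<in>set ?d. 0 < x"
    using assms unfolding fv_def by auto
  have forc: "connected_graph n E" if r: "realization ?d E" for E
  proof -
    have sg: "simple_graph n E" using r unfolding realization_def by simp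
    have "degree n E 0 = n - 1"
      using r assms unfolding realization_def fv_def by (auto simp: nth_map)
    moreover have sub: "{j. j < n \<and> E 0 j} \<subseteq> {..<n} - {0}"
      using sg unfolding simple_graph_def by auto
    ultimately have "{j. j < n \<and> E 0 j} = {..<n} - {0}"
      unfolding degree_def using assms by (intro card_subset_eq) auto
    then have adj: "E 0 j" if "0 < j" "j < n" for j using that by blast
    have to0: "E\<^sup>*\<^sup>* i 0" if "i < n" for i
    proof (cases "i = 0")
      case False
      then have "E i 0" using adj[of i] that sg unfolding simple_graph_def by blast
      then show ?thesis by simp
    qed simp
    have from0: "E\<^sup>*\<^sup>* 0 j" if "j < n" for j
      using adj[of j] that by (cases "j = 0") auto
    show ?thesis unfolding connected_graph_def
      using to0 from0 by (meson rtranclp_trans)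
  qed
  show ?thesis
    unfolding is_partition_def forcibly_connected_def graphical_def
    using real sorted pos forc fv_sum[OF assms] by auto
qed

theorem proposition1:
  fixes n N :: nat
  assumes "0 < n" and "even N"
  shows "(\<exists>d. is_partition N n d \<and> potentially_connected d) \<longleftrightarrow>
         (\<exists>d. is_partition N n d \<and> forcibly_connected d)"
proof
  assume "\<exists>d. is_partition N n d \<and> forcibly_connected d"
  then obtain d where d: "is_partition N n d" "forcibly_connected d" by auto
  then show "\<exists>d. is_partition N n d \<and> potentially_connected d"
    unfolding forcibly_connected_def potentially_connected_def graphical_def by auto
next
  assume "\<exists>d. is_partition N n d \<and> potentially_connected d"
  then obtain d E where d: "is_partition N n d" "realization d E" "connected_graph n E"
    unfolding potentially_connected_def is_partition_def by auto
  have len: "length d = n" and sN: "sum_list d = N" and pos: "\<forall>x\<in>set d. 0 < x"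
    using d(1) unfolding is_partition_def by auto
  have sg: "simple_graph n E" using d(2) len unfolding realization_def by auto
  have lo: "2*(n-1) \<le> N"
    using lower[OF sg d(3) assms(1)] sum_deg[OF d(2)] len sN by simp
  have hi: "N \<le> n*(n-1)" using sum_upper[OF d(2)] len sN by simp
  have n2: "2 \<le> n"
  proof (rule ccontr)
    assume "\<not> 2 \<le> n"
    then have "n = 1" using assms(1) by simp
    then have "N \<le> 0" using hi by simp
    moreover have "0 < N"
    proof -
      have "d ! 0 \<in> set d" using len \<open>n = 1\<close> by simp
      then have "0 < d ! 0" using pos by auto
      moreover have "d = [d ! 0]" using len \<open>n = 1\<close>
        by (metis One_nat_def length_0_conv length_Suc_conv nth_Cons_0)
      ultimately show ?thesis using sN by (metis sum_list.Cons sum_list.Nil add_0_right)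
    qed
    ultimately show False by simp
  qed
  define k where "k = (N - 2*(n-1)) div 2"
  have Nk: "N = 2*(n-1) + 2*k" using lo assms(2) unfolding k_def by auto
  obtain a c where ac: "1 \<le> a" "a \<le> c" "c < n"
    "2*int a*int n - 3*int a - int a * int a + 2 * int c = int (2*(n-1) + 2*k)"
    using exists_ac[OF n2, of k] hi Nk by auto
  have "int (a*(n-1) + c + (c-a)*(a+1) + (n-1-c)*a) = int N"
    using S_int[OF ac(2,3)] ac(4) Nk by simp
  then have "a*(n-1) + c + (c-a)*(a+1) + (n-1-c)*a = N" by (simp only: of_nat_eq_iff)
  then show "\<exists>d. is_partition N n d \<and> forcibly_connected d"
    using construct[OF ac(1-3)] by auto
qed

end
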